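(* Let $U$ be as in the context and let $\mathcal{N}_U(\mathbb{N}_1)=\{x\in\mathbb{R}_1: U^k(x)\notin\mathbb{N}_1 \text{ for all } k\in\mathbb{N}_0\}$. Suppose that for every $n\in\mathbb{N}_1$ and every real $\rho>0$ there exists $z\in(n,n+\rho)\cap\mathcal{N}_U(\mathbb{N}_1)$ such that $\mathcal{T}_U(z)\to\{1,2\}$. Then the only $U$-cycle is $(1,2,1,2,\dots)$; that is, if $x\in\mathbb{R}_1$ and $U^k(x)=x$ for some $k\ge1$, then $x\in\{1,2\}$.
   Context: $\mathbb{R}_1=\{x\ge1\}$, $\mathbb{N}_0=\{0,1,2,\dots\}$, $\mathbb{N}_1=\{1,2,\dots\}$. $U:\mathbb{R}_1\to\mathbb{R}_1$: $U(x)=x/2$ if $\lfloor x\rfloor$ is even, $U(x)=(3x+1)/2$ if $\lfloor x\rfloor$ is odd; $U^i$ is the $i$-th iterate and $\mathcal T_U(x)=(U^i(x))_{i\ge0}$. The notation $\mathcal T_U(x)\to\{1,2\}$ means $\{\lim_{k\to\infty}U^{2k}(x),\lim_{k\to\infty}U^{2k+1}(x)\}=\{1,2\}$ (both limits existing). A $U$-cycle is the trajectory of a point $z$ with $U^n(z)=z$ for some $n\ge1$. *)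

theory Defs
  imports "HOL-Analysis.Analysis"
begin

definition U :: "real \<Rightarrow> real" where
  "U x = (if even \<lfloor>x\<rfloor> then x / 2 else (3 * x + 1) / 2)"

definition N1 :: "real set" where
  "N1 = {real n | n. n \<ge> 1}"

definition NU_N1 :: "real set" where
  "NU_N1 = {x. x \<ge> 1 \<and> (\<forall>k::nat. (U ^^ k) x \<notin> N1)}"

definition traj_to_12 :: "real \<Rightarrow> bool" where
  "traj_to_12 x = (\<exists>a b. (\<lambda>k. (U ^^ (2 * k)) x) \<longlonglongrightarrow> a \<and>
                         (\<lambda>k. (U ^^ (2 * k + 1)) x) \<longlonglongrightarrow> b \<and> {a, b} = {1, 2})"

end

theory Submission
  imports Defs
begin

fun cf :: "real \<Rightarrow> nat \<Rightarrow> real" where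
  "cf x 0 = 1"
| "cf x (Suc i) = (if even \<lfloor>(U ^^ i) x\<rfloor> then cf x i / 2 else 3 * cf x i / 2)"

fun df :: "real \<Rightarrow> nat \<Rightarrow> real" where
  "df x 0 = 0"
| "df x (Suc i) = (if even \<lfloor>(U ^^ i) x\<rfloor> then df x i / 2 else (3 * df x i + 1) / 2)"

definition sc :: "nat \<Rightarrow> real \<Rightarrow> real \<Rightarrow> bool" where
  "sc i y x = (\<forall>l<i. \<lfloor>(U ^^ l) y\<rfloor> = \<lfloor>(U ^^ l) x\<rfloor>)"

lemma sc_Suc: "sc (Suc i) y x \<longleftrightarrow> sc i y x \<and> \<lfloor>(U ^^ i) y\<rfloor> = \<lfloor>(U ^^ i) x\<rfloor>"
  unfolding sc_def using less_Suc_eq by auto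

lemma sc_mono: "sc k y x \<Longrightarrow> i \<le> k \<Longrightarrow> sc i y x"
  unfolding sc_def by auto

lemma cf_pos: "cf x i > 0"
  by (induction i) auto

lemma df_nn: "df x i \<ge> 0"
  by (induction i) auto

lemma contr: "i \<ge> 1 \<Longrightarrow> cf x i < 1 \<or> df x i > 0"
proof (induction i)
  case 0 then show ?case by simp
next
  case (Suc i)
  show ?case
  proof (cases "i = 0")
    case True then show ?thesis by auto
  next
    case False
    then have "cf x i < 1 \<or> df x i > 0" using Suc by auto
    then show ?thesis using df_nn[of x i] by auto
  qed
qed

lemma aff: "sc i y x \<Longrightarrow> (U ^^ i) y = cf x i * y + df x i"
proof (induction i)
  case 0 then show ?case by simp
next
  case (Suc i)
  then have h: "sc i y x" and f: "\<lfloor>(U ^^ i) y\<rfloor> = \<lfloor>(U ^^ i) x\<rfloor>" using sc_Suc by auto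
  have e: "(U ^^ i) y = cf x i * y + df x i" using Suc.IH h by simp
  have "(U ^^ Suc i) y = U ((U ^^ i) y)" by simp
  also have "\<dots> = U (cf x i * y + df x i)" using e by simp
  finally have q: "(U ^^ Suc i) y = U (cf x i * y + df x i)" .
  have f2: "\<lfloor>cf x i * y + df x i\<rfloor> = \<lfloor>(U ^^ i) x\<rfloor>" using e f by simp
  show ?case
  proof (cases "even \<lfloor>(U ^^ i) x\<rfloor>")
    case True
    then have "U (cf x i * y + df x i) = (cf x i * y + df x i) / 2" using f2 by (simp add: U_def)
    then show ?thesis using q True by (simp add: field_simps)
  next
    case False
    then have "U (cf x i * y + df x i) = (3 * (cf x i * y + df x i) + 1) / 2" using f2 by (simp add: U_def)
    then show ?thesis using q False by (simp add: field_simps)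
  qed
qed

lemma aff_self: "(U ^^ i) x = cf x i * x + df x i"
  using aff[of i x x] unfolding sc_def by simp

lemma right_nb: "\<exists>\<epsilon>>0. \<forall>w. y \<le> w \<and> w < y + \<epsilon> \<longrightarrow> sc i w y"
proof (induction i)
  case 0 then show ?case by (rule exI[of _ 1]) (simp add: sc_def)
next
  case (Suc i)
  then obtain \<epsilon> where ep: "\<epsilon> > 0" "\<forall>w. y \<le> w \<and> w < y + \<epsilon> \<longrightarrow> sc i w y" by blast
  define e where "e = of_int \<lfloor>(U ^^ i) y\<rfloor> + 1 - (U ^^ i) y"
  have epos: "e > 0" unfolding e_def by linarith
  define \<epsilon>' where "\<epsilon>' = min \<epsilon> (e / cf y i)"
  have cp: "cf y i > 0" by (rule cf_pos)
  have "\<epsilon>' > 0" unfolding \<epsilon>'_def using ep epos cp by auto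
  moreover have "sc (Suc i) w y" if w: "y \<le> w" "w < y + \<epsilon>'" for w
  proof -
    have s: "sc i w y" using ep w unfolding \<epsilon>'_def by auto
    have a1: "(U ^^ i) w = cf y i * w + df y i" using aff[OF s] .
    have a2: "(U ^^ i) y = cf y i * y + df y i" by (rule aff_self)
    have "cf y i * (w - y) < cf y i * (e / cf y i)"
      using w cp unfolding \<epsilon>'_def by (intro mult_strict_left_mono) auto
    then have lt: "cf y i * (w - y) < e" using cp by simp
    have ge: "cf y i * (w - y) \<ge> 0" using cp w by simp
    have id: "(U ^^ i) w = (U ^^ i) y + cf y i * (w - y)" using a1 a2 by (simp add: algebra_simps)
    have "\<lfloor>(U ^^ i) w\<rfloor> = \<lfloor>(U ^^ i) y\<rfloor>"
      unfolding floor_eq_iff using id lt ge e_def of_int_floor_le[of "(U ^^ i) y"] by linarith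
    then show ?thesis using s sc_Suc by auto
  qed
  ultimately show ?case by blast
qed

lemma U_ge1: "y \<ge> 1 \<Longrightarrow> U y \<ge> 1"
proof -
  assume y: "y \<ge> 1"
  show ?thesis
  proof (cases "even \<lfloor>y\<rfloor>")
    case True
    have "\<lfloor>y\<rfloor> \<noteq> 1" using True by auto
    moreover have "\<lfloor>y\<rfloor> \<ge> 1" using y by linarith
    ultimately have "\<lfloor>y\<rfloor> \<ge> 2" by linarith
    then have "y \<ge> 2" by linarith
    then show ?thesis using True by (simp add: U_def)
  next
    case False then show ?thesis using y by (simp add: U_def)
  qed
qed

lemma Upow_ge1: "y \<ge> 1 \<Longrightarrow> (U ^^ i) y \<ge> 1"
  by (induction i) (auto intro: U_ge1)

lemma U12: "U 1 = 2" "U 2 = 1"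
  by (simp_all add: U_def)

lemma orbit12: "w \<in> {1,2} \<Longrightarrow> (U ^^ i) w \<in> {1, 2}"
  by (induction i) (auto simp: U12)

lemma funpow_comm: "(f ^^ a) ((f ^^ b) y) = (f ^^ b) ((f ^^ a) y)"
  by (metis add.commute comp_apply funpow_add)

theorem mainTheorem5:
  assumes hyp: "\<forall>n::nat. n \<ge> 1 \<longrightarrow> (\<forall>\<rho>::real. \<rho> > 0 \<longrightarrow>
                  (\<exists>z. real n < z \<and> z < real n + \<rho> \<and> z \<in> NU_N1 \<and> traj_to_12 z))"
  shows "\<forall>x::real. \<forall>k::nat. x \<ge> 1 \<and> k \<ge> 1 \<and> (U ^^ k) x = x \<longrightarrow> x \<in> {1, 2}"
proof (intro allI impI)
  fix x :: real and k :: nat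
  assume "x \<ge> 1 \<and> k \<ge> 1 \<and> (U ^^ k) x = x"
  then have x1: "x \<ge> 1" and k1: "k \<ge> 1" and cyc: "(U ^^ k) x = x" by auto
  define c where "c = cf x k"
  define d where "d = df x k"
  have cpos: "c > 0" unfolding c_def by (rule cf_pos)
  have fx: "x = c * x + d" using aff_self[of k x] cyc unfolding c_def d_def by simp
  have c1: "c < 1"
  proof (rule ccontr)
    assume "\<not> c < 1"
    then have "c \<ge> 1" by simp
    then have "c * x \<ge> x" using x1 by (simp add: mult_le_cancel_right1)
    moreover have "c < 1 \<or> d > 0" using contr[OF k1] unfolding c_def d_def .
    ultimately show False using fx \<open>c \<ge> 1\<close> by linarith
  qed
  define g where "g i = ((U ^^ i) x - of_int \<lfloor>(U ^^ i) x\<rfloor>) / cf x i" for i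
  have fin: "finite (g ` {..<k})" and ne: "g ` {..<k} \<noteq> {}" using k1 by (auto simp: lessThan_empty_iff)
  obtain j where j: "j < k" "g j = Min (g ` {..<k})"
    using Min_in[OF fin ne] by auto
  have jmin: "\<And>i. i < k \<Longrightarrow> g j \<le> g i" using j Min_le[OF fin] by auto
  define \<delta> where "\<delta> = g j"
  have \<delta>0: "\<delta> \<ge> 0" unfolding \<delta>_def g_def using cf_pos[of x j]
    by (simp add: of_int_floor_le)
  define p where "p = x - \<delta>"
  have left: "sc k y x" if y: "p \<le> y" "y \<le> x" for y
  proof -
    have "i \<le> k \<Longrightarrow> sc i y x" for i
    proof (induction i)
      case 0 then show ?case by (simp add: sc_def)
    next
      case (Suc i)
      then have s: "sc i y x" and ik: "i < k" by auto
      have a1: "(U ^^ i) y = cf x i * y + df x i" using aff[OF s] .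
      have a2: "(U ^^ i) x = cf x i * x + df x i" by (rule aff_self)
      have cp: "cf x i > 0" by (rule cf_pos)
      have "x - y \<le> g i" using jmin[OF ik] y unfolding p_def \<delta>_def by linarith
      then have "cf x i * (x - y) \<le> cf x i * g i" using cp by simp
      also have "\<dots> = (U ^^ i) x - of_int \<lfloor>(U ^^ i) x\<rfloor>" unfolding g_def using cp by simp
      finally have le: "cf x i * (x - y) \<le> (U ^^ i) x - of_int \<lfloor>(U ^^ i) x\<rfloor>" .
      have ge: "cf x i * (x - y) \<ge> 0" using cp y by simp
      have id: "(U ^^ i) y = (U ^^ i) x - cf x i * (x - y)" using a1 a2 by (simp add: algebra_simps)
      have "\<lfloor>(U ^^ i) y\<rfloor> = \<lfloor>(U ^^ i) x\<rfloor>"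
        unfolding floor_eq_iff using id le ge real_of_int_floor_add_one_gt[of "(U ^^ i) x"] by linarith
      then show ?case using s sc_Suc by auto
    qed
    then show ?thesis by simp
  qed
  obtain \<epsilon> where ep: "\<epsilon> > 0" "\<forall>w. x \<le> w \<and> w < x + \<epsilon> \<longrightarrow> sc k w x"
    using right_nb by blast
  have J: "sc k w x" if "p \<le> w" "w < x + \<epsilon>" for w
    using left ep that by (cases "w \<le> x") auto
  have iter: "(U ^^ (m * k)) w = x + c ^ m * (w - x)" if w: "p \<le> w" "w < x + \<epsilon>" for w m
  proof (induction m)
    case 0 then show ?case by simp
  next
    case (Suc m)
    define v where "v = x + c ^ m * (w - x)"
    have cm: "c ^ m > 0" "c ^ m \<le> 1" using cpos c1 by (auto simp: power_le_one)
    have "p \<le> v \<and> v < x + \<epsilon>"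
    proof (cases "w \<le> x")
      case True
      have "c ^ m * (x - w) \<le> x - w" using cm True by (simp add: mult_left_le_one_le)
      moreover have "v = x - c ^ m * (x - w)" unfolding v_def by (simp add: algebra_simps)
      moreover have "c ^ m * (x - w) \<ge> 0" using cm True by simp
      ultimately show ?thesis using True w \<delta>0 ep(1) p_def by linarith
    next
      case False
      have "c ^ m * (w - x) \<le> w - x" using cm False by (simp add: mult_left_le_one_le)
      moreover have "c ^ m * (w - x) \<ge> 0" using cm False by simp
      ultimately show ?thesis unfolding v_def using False w \<delta>0 ep(1) p_def by linarith
    qed
    then have sv: "sc k v x" using J by auto
    have "(U ^^ (Suc m * k)) w = (U ^^ k) ((U ^^ (m * k)) w)"
      by (simp add: funpow_add)
    also have "\<dots> = (U ^^ k) v" using Suc v_def by simp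
    also have "\<dots> = c * v + d" using aff[OF sv] unfolding c_def d_def .
    also have "\<dots> = x + c ^ Suc m * (w - x)" unfolding v_def using fx
      by (simp add: algebra_simps)
    finally show ?case .
  qed
  have lim: "(\<lambda>m. (U ^^ i) ((U ^^ ((2 * m) * k)) w)) \<longlonglongrightarrow> (U ^^ i) x"
    if w: "p \<le> w" "w < x + \<epsilon>" and ik: "i \<le> k" for w i
  proof -
    have eq: "(U ^^ i) ((U ^^ ((2 * m) * k)) w) = cf x i * (x + (c^2) ^ m * (w - x)) + df x i" for m
    proof -
      define v where "v = x + c ^ (2 * m) * (w - x)"
      have cm: "c ^ (2*m) > 0" "c ^ (2*m) \<le> 1" using cpos c1 by (auto simp: power_le_one)
      have "p \<le> v \<and> v < x + \<epsilon>"
      proof (cases "w \<le> x")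
        case True
        have "c ^ (2*m) * (x - w) \<le> x - w" using cm True by (simp add: mult_left_le_one_le)
        moreover have "v = x - c ^ (2*m) * (x - w)" unfolding v_def by (simp add: algebra_simps)
        moreover have "c ^ (2*m) * (x - w) \<ge> 0" using cm True by simp
        ultimately show ?thesis using True w \<delta>0 ep(1) p_def by linarith
      next
        case False
        have "c ^ (2*m) * (w - x) \<le> w - x" using cm False by (simp add: mult_left_le_one_le)
        moreover have "c ^ (2*m) * (w - x) \<ge> 0" using cm False by simp
        ultimately show ?thesis unfolding v_def using False w \<delta>0 ep(1) p_def by linarith
      qed
      then have sv: "sc i v x" using J sc_mono ik by blast
      have "(U ^^ i) ((U ^^ ((2 * m) * k)) w) = (U ^^ i) v" using iter[OF w] v_def by simp
      also have "\<dots> = cf x i * v + df x i" using aff[OF sv] .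
      finally show ?thesis unfolding v_def by (simp add: power_mult)
    qed
    have c2: "c^2 < 1" "c^2 \<ge> 0" using cpos c1 by (auto simp: power_less_one_iff abs_square_less_1)
    have "(\<lambda>m. cf x i * (x + (c^2) ^ m * (w - x)) + df x i) \<longlonglongrightarrow> cf x i * (x + 0 * (w - x)) + df x i"
      by (intro tendsto_intros LIMSEQ_realpow_zero c2)
    then show ?thesis unfolding eq using aff_self[of i x] by simp
  qed
  define n where "n = \<lfloor>(U ^^ j) x\<rfloor>"
  have n1: "n \<ge> 1" unfolding n_def using Upow_ge1[OF x1, of j] by linarith
  define N where "N = nat n"
  have N: "real N = of_int n" "N \<ge> 1" unfolding N_def using n1 by auto
  have cj: "cf x j > 0" by (rule cf_pos)
  have Ujp: "(U ^^ j) p = of_int n"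
  proof -
    have "sc j p x" using left[of p] \<delta>0 sc_mono j(1) unfolding p_def by auto
    then have "(U ^^ j) p = cf x j * p + df x j" by (rule aff)
    also have "\<dots> = (U ^^ j) x - cf x j * \<delta>" using aff_self[of j x] unfolding p_def
      by (simp add: algebra_simps)
    also have "\<dots> = of_int n" unfolding \<delta>_def g_def n_def using cj by simp
    finally show ?thesis .
  qed
  define \<rho> where "\<rho> = cf x j * (x + \<epsilon> - p)"
  have "\<rho> > 0" unfolding \<rho>_def p_def using cj \<delta>0 ep(1) by simp
  then obtain z where z: "real N < z" "z < real N + \<rho>" "traj_to_12 z" using hyp N(2) by blast
  define y where "y = p + (z - real N) / cf x j"
  have yJ: "p \<le> y" "y < x + \<epsilon>"
  proof -
    show "p \<le> y" unfolding y_def using z cj by simp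
    have "(z - real N) / cf x j < \<rho> / cf x j" using z cj by (simp add: divide_strict_right_mono)
    then show "y < x + \<epsilon>" unfolding y_def \<rho>_def using cj by simp
  qed
  have Ujy: "(U ^^ j) y = z"
  proof -
    have sy: "sc j y x" using J[OF yJ] sc_mono j(1) by auto
    have sp: "sc j p x" using left[of p] \<delta>0 sc_mono j(1) unfolding p_def by auto
    have "(U ^^ j) y = cf x j * y + df x j" using aff[OF sy] .
    also have "\<dots> = (cf x j * p + df x j) + (z - real N)" unfolding y_def using cj
      by (simp add: field_simps)
    also have "\<dots> = z" using aff[OF sp] Ujp N(1) by simp
    finally show ?thesis .
  qed
  obtain a b where ab: "(\<lambda>m. (U ^^ (2 * m)) z) \<longlonglongrightarrow> a" "(\<lambda>m. (U ^^ (2 * m + 1)) z) \<longlonglongrightarrow> b"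
    "{a, b} = {1, 2}" using z(3) unfolding traj_to_12_def by blast
  have sm: "strict_mono (\<lambda>m. m * k)" using k1 by (simp add: strict_mono_def)
  have e1: "(\<lambda>m. (U ^^ (2 * m)) z) \<circ> (\<lambda>m. m * k) = (\<lambda>m. (U ^^ j) ((U ^^ ((2 * m) * k)) y))"
  proof
    fix m
    have "((\<lambda>m. (U ^^ (2 * m)) z) \<circ> (\<lambda>m. m * k)) m = (U ^^ ((2 * m) * k)) ((U ^^ j) y)"
      using Ujy by (simp add: mult.assoc)
    then show "((\<lambda>m. (U ^^ (2 * m)) z) \<circ> (\<lambda>m. m * k)) m = (U ^^ j) ((U ^^ ((2 * m) * k)) y)"
      using funpow_comm by metis
  qed
  have e2: "(\<lambda>m. (U ^^ (2 * m + 1)) z) \<circ> (\<lambda>m. m * k) = (\<lambda>m. (U ^^ Suc j) ((U ^^ ((2 * m) * k)) y))"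
  proof
    fix m
    have "((\<lambda>m. (U ^^ (2 * m + 1)) z) \<circ> (\<lambda>m. m * k)) m = U ((U ^^ ((2 * m) * k)) ((U ^^ j) y))"
      using Ujy by (simp add: mult.assoc)
    also have "\<dots> = U ((U ^^ j) ((U ^^ ((2 * m) * k)) y))" using funpow_comm by metis
    finally show "((\<lambda>m. (U ^^ (2 * m + 1)) z) \<circ> (\<lambda>m. m * k)) m = (U ^^ Suc j) ((U ^^ ((2 * m) * k)) y)"
      by simp
  qed
  have "a = (U ^^ j) x"
    using LIMSEQ_unique[OF LIMSEQ_subseq_LIMSEQ[OF ab(1) sm]] lim[OF yJ, of j] j(1) e1 by simp
  moreover have "b = (U ^^ Suc j) x"
    using LIMSEQ_unique[OF LIMSEQ_subseq_LIMSEQ[OF ab(2) sm]] lim[OF yJ, of "Suc j"] j(1) e2 by simp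
  ultimately have xj: "(U ^^ j) x \<in> {1, 2}" using ab(3) by auto
  have "x = (U ^^ ((k - j) + j)) x" using cyc j(1) by simp
  also have "\<dots> = (U ^^ (k - j)) ((U ^^ j) x)" by (simp add: funpow_add)
  finally show "x \<in> {1, 2}" using orbit12[OF xj] by metis
qed

end
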